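(* Let $A=(A(i,j))_{i,j\in\mathbb{N}}$ be an infinite matrix with entries in $\{0,1\}$, let $(X,\mu)$ be a $\sigma$-finite measure space and let $(\{f_i\}_{i=1}^\infty,\{D_i\}_{i=1}^\infty)$ together with a nonsingular $F:X\to X$ be an $A_\infty$-branching system on $(X,\mu)$. For $i\in\mathbb{N}$ let $T_i\in\mathcal{B}(L_2(X,\mu))$ be the operator $T_i\phi=\chi_{R_i}\cdot(\Phi_{f_i^{-1}})^{1/2}\cdot(\phi\circ F)$, with adjoint $T_i^*$. Let $\varphi\in L_1(X,\mu)$ with $\varphi\geq0$ $\mu$-a.e. (so $\sqrt{\varphi}\in L_2(X,\mu)$). 1. If $N\in\mathbb{N}$ and $\operatorname{supp}(\varphi)\subseteq\bigcup_{i=1}^N R_i$, then $P_F(\varphi)=\sum_{i=1}^N\left(T_i^*\sqrt{\varphi}\right)^2$. 2. If $\operatorname{supp}(\varphi)\subseteq\bigcup_{i=1}^\infty R_i$, then $P_F(\varphi)=\lim_{N\to\infty}\sum_{i=1}^N\left(T_i^*\sqrt{\varphi}\right)^2$, with convergence in the norm of $L_1(X,\mu)$.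
   Context: Notation: for measurable $Y,Z\subseteq X$, write $Y\stackrel{\mu\text{-a.e.}}{=}Z$ if $\mu(Y\setminus Z)=0=\mu(Z\setminus Y)$. For a measurable map $h$ on a measurable set $W$, $\mu\circ h$ is the measure $E\mapsto\mu(h(E))$ on $W$. For finite $U,V\subseteq\mathbb{N}$ and $j\in\mathbb{N}$ put $A(U,V,j)=\prod_{u\in U}A(u,j)\prod_{v\in V}(1-A(v,j))$. A transformation $F$ is nonsingular if $\mu(F^{-1}(E))=0$ whenever $\mu(E)=0$. The Perron-Frobenius operator $P_F:L_1(X,\mu)\to L_1(X,\mu)$ is defined by $\int_E P_F\psi\,d\mu=\int_{F^{-1}(E)}\psi\,d\mu$ for all measurable $E\subseteq X$ and $\psi\in L_1(X,\mu)$. An $A_\infty$-branching system on $(X,\mu)$ is a family $(\{f_i\}_{i=1}^\infty,\{D_i\}_{i=1}^\infty)$ together with a nonsingular transformation $F:X\to X$ such that: (1) $f_i:D_i\to R_i$ is measurable, $D_i,R_i$ are measurable subsets of $X$, and $f_i(D_i)\stackrel{\mu\text{-a.e.}}{=}R_i$ for each $i$; (2) $F\circ f_i=\mathrm{id}_{D_i}$ $\mu$-a.e. on $D_i$ for each $i$; (3) $\mu(R_i\cap R_j)=0$ for $i\neq j$; (4) $\mu(R_j\cap D_i)=0$ if $A(i,j)=0$ and $\mu(R_j\setminus D_i)=0$ if $A(i,j)=1$; (5) for each pair $U,V$ of finite subsets of $\mathbb{N}$ such that $A(U,V,j)=1$ for only finitely many $j$, $\bigcap_{u\in U}D_u\cap\bigcap_{v\in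 V}(X\setminus D_v)\stackrel{\mu\text{-a.e.}}{=}\bigcup_{j:A(U,V,j)=1}R_j$; (6) there exist the Radon-Nikodym derivatives $\Phi_{f_i}$ of $\mu\circ f_i$ with respect to $\mu$ on $D_i$ and $\Phi_{f_i^{-1}}$ of $\mu\circ f_i^{-1}$ with respect to $\mu$ on $R_i$, where $f_i^{-1}:=F|_{R_i}$. The functions $\Phi_{f_i}$, $\Phi_{f_i^{-1}}$ are extended by $0$ outside $D_i$, respectively $R_i$. (The operators $T_i$ are the images $\pi(S_i)$ of the canonical generators of the Cuntz–Krieger algebra $O_A$ under the representation induced by the branching system.) *)

theory Defs
  imports "HOL-Analysis.Analysis"
begin

text \<open>Indices: the paper's index set \<open>\<nat>\<close> is rendered as the type nat.
  Functions on X are real-valued.\<close>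

definition aeeq :: "'a measure \<Rightarrow> 'a set \<Rightarrow> 'a set \<Rightarrow> bool" where
  "aeeq M Y Z \<longleftrightarrow> Y \<in> sets M \<and> Z \<in> sets M \<and>
     emeasure M (Y - Z) = 0 \<and> emeasure M (Z - Y) = 0"

definition Aset :: "(nat \<Rightarrow> nat \<Rightarrow> nat) \<Rightarrow> nat set \<Rightarrow> nat set \<Rightarrow> nat \<Rightarrow> nat" where
  "Aset A U V j = (\<Prod>u\<in>U. A u j) * (\<Prod>v\<in>V. (1 - A v j))"

definition nonsingular :: "'a measure \<Rightarrow> ('a \<Rightarrow> 'a) \<Rightarrow> bool" where
  "nonsingular M F \<longleftrightarrow> F \<in> measurable M M \<and>
     (\<forall>E\<in>sets M. emeasure M E = 0 \<longrightarrow> emeasure M (F -` E \<inter> space M) = 0)"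

text \<open>\<open>Phi_f i\<close> is the Radon-Nikodym derivative of \<open>\<mu> \<circ> f_i\<close> w.r.t. \<open>\<mu>\<close> on \<open>D_i\<close>,
  \<open>Phi_finv i\<close> that of \<open>\<mu> \<circ> f_i\<^sup>-\<^sup>1\<close> (with \<open>f_i\<^sup>-\<^sup>1 = F|R_i\<close>) on \<open>R_i\<close>,
  both extended by 0.\<close>
definition A_inf_branching_system ::
  "'a measure \<Rightarrow> (nat \<Rightarrow> nat \<Rightarrow> nat) \<Rightarrow> (nat \<Rightarrow> 'a \<Rightarrow> 'a) \<Rightarrow> (nat \<Rightarrow> 'a set)
   \<Rightarrow> (nat \<Rightarrow> 'a set) \<Rightarrow> ('a \<Rightarrow> 'a) \<Rightarrow> (nat \<Rightarrow> 'a \<Rightarrow> real) \<Rightarrow> (nat \<Rightarrow> 'a \<Rightarrow> real) \<Rightarrow> bool"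
where
  "A_inf_branching_system M A f D R F Phi_f Phi_finv \<longleftrightarrow>
     nonsingular M F \<and>
     \<comment> \<open>(1)\<close>
     (\<forall>i. D i \<in> sets M \<and> R i \<in> sets M \<and>
          f i \<in> measurable (restrict_space M (D i)) M \<and>
          f i ` D i \<subseteq> R i \<and> aeeq M (f i ` D i) (R i)) \<and>
     \<comment> \<open>(2)\<close>
     (\<forall>i. AE x in M. x \<in> D i \<longrightarrow> F (f i x) = x) \<and>
     \<comment> \<open>(3)\<close>
     (\<forall>i j. i \<noteq> j \<longrightarrow> emeasure M (R i \<inter> R j) = 0) \<and>
     \<comment> \<open>(4)\<close>
     (\<forall>i j. (A i j = 0 \<longrightarrow> emeasure M (R j \<inter> D i) = 0) \<and>
            (A i j = 1 \<longrightarrow> emeasure M (R j - D i) = 0)) \<and>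
     \<comment> \<open>(5)\<close>
     (\<forall>U V. finite U \<longrightarrow> finite V \<longrightarrow> finite {j. Aset A U V j = 1} \<longrightarrow>
        aeeq M (space M \<inter> (\<Inter>u\<in>U. D u) \<inter> (\<Inter>v\<in>V. space M - D v))
               (\<Union>j\<in>{j. Aset A U V j = 1}. R j)) \<and>
     \<comment> \<open>(6)\<close>
     (\<forall>i. Phi_f i \<in> borel_measurable M \<and> (\<forall>x\<in>space M. Phi_f i x \<ge> 0) \<and>
          (\<forall>x. x \<notin> D i \<longrightarrow> Phi_f i x = 0) \<and>
          (\<forall>E\<in>sets M. E \<subseteq> D i \<longrightarrow>
              f i ` E \<in> sets M \<and>
              emeasure M (f i ` E) = (\<integral>\<^sup>+x\<in>E. ennreal (Phi_f i x) \<partial>M))) \<and>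
     (\<forall>i. Phi_finv i \<in> borel_measurable M \<and> (\<forall>x\<in>space M. Phi_finv i x \<ge> 0) \<and>
          (\<forall>x. x \<notin> R i \<longrightarrow> Phi_finv i x = 0) \<and>
          (\<forall>E\<in>sets M. E \<subseteq> R i \<longrightarrow>
              F ` E \<in> sets M \<and>
              emeasure M (F ` E) = (\<integral>\<^sup>+x\<in>E. ennreal (Phi_finv i x) \<partial>M)))"

definition L2 :: "'a measure \<Rightarrow> ('a \<Rightarrow> real) \<Rightarrow> bool" where
  "L2 M g \<longleftrightarrow> g \<in> borel_measurable M \<and> integrable M (\<lambda>x. (g x)\<^sup>2)"

definition T_op :: "(nat \<Rightarrow> 'a set) \<Rightarrow> ('a \<Rightarrow> 'a) \<Rightarrow> (nat \<Rightarrow> 'a \<Rightarrow> real) \<Rightarrow> nat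
    \<Rightarrow> ('a \<Rightarrow> real) \<Rightarrow> 'a \<Rightarrow> real" where
  "T_op R F Phi_finv i \<phi> x = indicator (R i) x * sqrt (Phi_finv i x) * \<phi> (F x)"

definition is_adjoint_image ::
  "'a measure \<Rightarrow> (('a \<Rightarrow> real) \<Rightarrow> 'a \<Rightarrow> real) \<Rightarrow> ('a \<Rightarrow> real) \<Rightarrow> ('a \<Rightarrow> real) \<Rightarrow> bool" where
  "is_adjoint_image M T \<psi> g \<longleftrightarrow> L2 M g \<and>
     (\<forall>\<phi>. L2 M \<phi> \<longrightarrow> (\<integral>x. T \<phi> x * \<psi> x \<partial>M) = (\<integral>x. \<phi> x * g x \<partial>M))"

definition is_PF :: "'a measure \<Rightarrow> ('a \<Rightarrow> 'a) \<Rightarrow> ('a \<Rightarrow> real) \<Rightarrow> ('a \<Rightarrow> real) \<Rightarrow> bool" where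
  "is_PF M F \<psi> p \<longleftrightarrow> integrable M p \<and>
     (\<forall>E\<in>sets M. (LINT x:E|M. p x) = (LINT x:(F -` E \<inter> space M)|M. \<psi> x))"

end

theory Submission
  imports Defs
begin


lemma L2_prod: assumes "L2 M u" "L2 M v" shows "integrable M (\<lambda>x. u x * v x)"
proof -
  have [measurable]: "u \<in> borel_measurable M" "v \<in> borel_measurable M" using assms unfolding L2_def by auto
  have I: "integrable M (\<lambda>x. (u x)\<^sup>2 + (v x)\<^sup>2)" using assms unfolding L2_def by auto
  have B: "\<And>x. \<bar>u x * v x\<bar> \<le> \<bar>(u x)\<^sup>2 + (v x)\<^sup>2\<bar>"
  proof -
    fix x
    have "0 \<le> (\<bar>u x\<bar> - \<bar>v x\<bar>)\<^sup>2" by simp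
    then have "2 * \<bar>u x\<bar> * \<bar>v x\<bar> \<le> (u x)\<^sup>2 + (v x)\<^sup>2" by (simp add: power2_eq_square algebra_simps)
    moreover have "\<bar>u x\<bar> * \<bar>v x\<bar> \<ge> 0" by simp
    ultimately have "\<bar>u x\<bar> * \<bar>v x\<bar> \<le> (u x)\<^sup>2 + (v x)\<^sup>2" by linarith
    then show "\<bar>u x * v x\<bar> \<le> \<bar>(u x)\<^sup>2 + (v x)\<^sup>2\<bar>" by (simp add: abs_mult)
  qed
  show ?thesis
    by (rule Bochner_Integration.integrable_bound[OF I]) (use B in \<open>auto intro!: AE_I2\<close>)
qed

lemma L2_diff: assumes "L2 M u" "L2 M v" shows "L2 M (\<lambda>x. u x - v x)"
proof -
  have [measurable]: "u \<in> borel_measurable M" "v \<in> borel_measurable M" using assms unfolding L2_def by auto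
  have "integrable M (\<lambda>x. u x * u x - 2 * (u x * v x) + v x * v x)"
    using L2_prod[OF assms(1) assms(1)] L2_prod[OF assms(1) assms(2)] L2_prod[OF assms(2) assms(2)] by auto
  then show ?thesis unfolding L2_def by (simp add: power2_eq_square algebra_simps)
qed

locale br1 =
  fixes M :: "'a measure" and F :: "'a \<Rightarrow> 'a" and D R :: "'a set" and f :: "'a \<Rightarrow> 'a"
    and Pf P :: "'a \<Rightarrow> real"
  assumes nons: "nonsingular M F"
  and D[measurable]: "D \<in> sets M" and R[measurable]: "R \<in> sets M"
  and fm: "f \<in> measurable (restrict_space M D) M"
  and fDR: "f ` D \<subseteq> R" and ae1: "aeeq M (f ` D) R"
  and inv: "AE x in M. x \<in> D \<longrightarrow> F (f x) = x"
  and Pf: "\<forall>E\<in>sets M. E \<subseteq> D \<longrightarrow> f ` E \<in> sets M \<and> emeasure M (f ` E) = (\<integral>\<^sup>+x\<in>E. ennreal (Pf x) \<partial>M)"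
  and Pm[measurable]: "P \<in> borel_measurable M" and Pnn: "\<forall>x\<in>space M. P x \<ge> 0"
  and P0: "\<forall>x. x \<notin> R \<longrightarrow> P x = 0"
  and PF: "\<forall>E\<in>sets M. E \<subseteq> R \<longrightarrow> F ` E \<in> sets M \<and> emeasure M (F ` E) = (\<integral>\<^sup>+x\<in>E. ennreal (P x) \<partial>M)"
begin

lemma Fm[measurable]: "F \<in> measurable M M"
  using nons unfolding nonsingular_def by auto

lemma F_null: "E \<in> null_sets M \<Longrightarrow> F -` E \<inter> space M \<in> null_sets M"
  using nons unfolding nonsingular_def by (auto intro!: null_setsI)

lemma PF_null: assumes "E \<in> null_sets M" "E \<subseteq> R" shows "F ` E \<in> null_sets M"
proof -
  have "E \<in> sets M" using assms by auto
  then have "F ` E \<in> sets M" "emeasure M (F ` E) = (\<integral>\<^sup>+x. ennreal (P x) * indicator E x \<partial>M)"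
    using PF assms by auto
  moreover have "(\<integral>\<^sup>+x. ennreal (P x) * indicator E x \<partial>M) = 0"
    using nn_integral_null_set[OF assms(1)] .
  ultimately show ?thesis by (auto intro: null_setsI)
qed

lemma Pf_null: assumes "E \<in> null_sets M" "E \<subseteq> D" shows "f ` E \<in> null_sets M"
proof -
  have "E \<in> sets M" using assms by auto
  then have "f ` E \<in> sets M" "emeasure M (f ` E) = (\<integral>\<^sup>+x. ennreal (Pf x) * indicator E x \<partial>M)"
    using Pf assms by auto
  moreover have "(\<integral>\<^sup>+x. ennreal (Pf x) * indicator E x \<partial>M) = 0"
    using nn_integral_null_set[OF assms(1)] .
  ultimately show ?thesis by (auto intro: null_setsI)
qed

lemma G_ex: "\<exists>G. G \<in> sets M \<and> G \<subseteq> R \<and> R - G \<in> null_sets M \<and> (\<forall>x\<in>G. f (F x) = x \<and> F x \<in> D)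
   \<and> F ` G \<subseteq> D \<and> D - F ` G \<in> null_sets M"
proof -
  obtain N where N: "\<And>x. x \<in> space M - N \<Longrightarrow> (x\<in>D \<longrightarrow> F (f x) = x)" "N \<in> null_sets M"
    using AE_E3[OF inv] by blast
  define N' where "N' = N \<inter> D"
  have N'n: "N' \<in> null_sets M" unfolding N'_def by (rule null_set_Int2[OF N(2) D])
  have N'D: "N' \<subseteq> D" unfolding N'_def by auto
  have fN': "f ` N' \<in> null_sets M" by (rule Pf_null[OF N'n N'D])
  have fD: "f ` D \<in> sets M" using Pf by auto
  define G where "G = f ` D - f ` N'"
  have Gs: "G \<in> sets M" unfolding G_def using fD fN' by auto
  have GR: "G \<subseteq> R" unfolding G_def using fDR by auto
  have Rf: "R - f ` D \<in> null_sets M" using ae1 unfolding aeeq_def by (auto intro: null_setsI)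
  have "R - G \<subseteq> (R - f ` D) \<union> f ` N'" unfolding G_def by auto
  moreover have "R - G \<in> sets M" using Gs R by auto
  moreover have "(R - f ` D) \<union> f ` N' \<in> null_sets M" using Rf fN' by (rule null_sets.Un)
  ultimately have RG: "R - G \<in> null_sets M"
    using null_sets_subset by blast
  have Dsp: "D \<subseteq> space M" using D by (rule sets.sets_into_space)
  have key: "\<forall>x\<in>G. f (F x) = x \<and> F x \<in> D"
  proof
    fix x assume "x \<in> G"
    then obtain y where y: "y \<in> D" "x = f y" "y \<notin> N'" unfolding G_def by auto
    then have "y \<in> space M - N" using Dsp N'_def by auto
    then have "F x = y" using N(1) y by auto
    then show "f (F x) = x \<and> F x \<in> D" using y by auto
  qed
  then have FGD: "F ` G \<subseteq> D" by auto
  have "D - F ` G \<subseteq> N' \<union> F ` (f ` N')"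
  proof
    fix y assume y: "y \<in> D - F ` G"
    show "y \<in> N' \<union> F ` (f ` N')"
    proof (cases "y \<in> N'")
      case False
      then have "y \<in> space M - N" using Dsp N'_def y by auto
      then have Fy: "F (f y) = y" using N(1) y by auto
      have "f y \<in> f ` N'"
      proof (rule ccontr)
        assume "f y \<notin> f ` N'"
        then have "f y \<in> G" unfolding G_def using y by auto
        then have "y \<in> F ` G" using Fy by (metis image_eqI)
        then show False using y by auto
      qed
      then show ?thesis using Fy by (metis UnI2 image_eqI)
    qed auto
  qed
  moreover have "F ` (f ` N') \<in> null_sets M"
    by (rule PF_null[OF fN']) (use fDR N'D in auto)
  moreover have "F ` G \<in> sets M" using PF Gs GR by auto
  moreover have "N' \<union> F ` (f ` N') \<in> null_sets M" using N'n calculation(2) by (rule null_sets.Un)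
  moreover have "D - F ` G \<in> sets M" using calculation(3) D by auto
  ultimately have "D - F ` G \<in> null_sets M"
    using null_sets_subset by blast
  show ?thesis using Gs GR RG key FGD \<open>D - F ` G \<in> null_sets M\<close> by blast
qed

lemma meas_eq: "distr (density M (\<lambda>x. ennreal (indicator R x * P x))) M F = density M (indicator D)"
proof -
  obtain G where G: "G \<in> sets M" "G \<subseteq> R" "R - G \<in> null_sets M" "\<forall>x\<in>G. f (F x) = x \<and> F x \<in> D"
    "F ` G \<subseteq> D" "D - F ` G \<in> null_sets M" using G_ex by blast
  have FGs: "F ` G \<in> sets M" using PF G by auto
  show ?thesis
  proof (rule measure_eqI)
    show "sets (distr (density M (\<lambda>x. ennreal (indicator R x * P x))) M F) = sets (density M (indicator D))"
      by simp
  next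
    fix A assume "A \<in> sets (distr (density M (\<lambda>x. ennreal (indicator R x * P x))) M F)"
    then have A[measurable]: "A \<in> sets M" by simp
    have "emeasure (distr (density M (\<lambda>x. ennreal (indicator R x * P x))) M F) A
        = emeasure (density M (\<lambda>x. ennreal (indicator R x * P x))) (F -` A \<inter> space M)"
      by (subst emeasure_distr) auto
    also have "\<dots> = (\<integral>\<^sup>+x. ennreal (indicator R x * P x) * indicator (F -` A \<inter> space M) x \<partial>M)"
      by (subst emeasure_density) auto
    also have "\<dots> = (\<integral>\<^sup>+x. ennreal (P x) * indicator (F -` A \<inter> G) x \<partial>M)"
    proof (rule nn_integral_cong_AE)
      have "AE x in M. x \<notin> R - G" using G(3) by (rule AE_not_in)
      then show "AE x in M. ennreal (indicator R x * P x) * indicator (F -` A \<inter> space M) x =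
          ennreal (P x) * indicator (F -` A \<inter> G) x"
      proof (rule AE_mp, intro AE_I2 impI)
        fix x assume x: "x \<in> space M" "x \<notin> R - G"
        show "ennreal (indicator R x * P x) * indicator (F -` A \<inter> space M) x =
          ennreal (P x) * indicator (F -` A \<inter> G) x"
          using x G(2) P0 by (cases "x \<in> R") (auto simp: indicator_def)
      qed
    qed
    also have "\<dots> = emeasure M (F ` (F -` A \<inter> G))"
    proof -
      have "F -` A \<inter> G = (F -` A \<inter> space M) \<inter> G" using G(1) sets.sets_into_space by blast
      also have "\<dots> \<in> sets M" by (rule sets.Int[OF measurable_sets[OF Fm A] G(1)])
      finally have "F -` A \<inter> G \<in> sets M" .
      moreover have "F -` A \<inter> G \<subseteq> R" using G(2) by auto
      ultimately show ?thesis using PF by auto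
    qed
    also have "F ` (F -` A \<inter> G) = A \<inter> F ` G" by auto
    also have "emeasure M (A \<inter> F ` G) = emeasure M (A \<inter> D)"
    proof -
      have "A \<inter> D = (A \<inter> F ` G) \<union> (A \<inter> (D - F ` G))" using G(5) by auto
      moreover have "A \<inter> (D - F ` G) \<in> null_sets M" using null_set_Int2[OF G(6) A] by (simp add: Int_commute)
      ultimately show ?thesis using FGs A by (simp add: emeasure_Un_null_set)
    qed
    also have "\<dots> = emeasure (density M (indicator D)) A"
    proof -
      have "emeasure (density M (indicator D)) A = (\<integral>\<^sup>+x. indicator D x * indicator A x \<partial>M)"
        by (rule emeasure_density) auto
      also have "\<dots> = (\<integral>\<^sup>+x. indicator (A \<inter> D) x \<partial>M)"
        by (intro nn_integral_cong) (simp add: indicator_inter_arith[symmetric] mult.commute)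
      also have "\<dots> = emeasure M (A \<inter> D)" using A D by (intro nn_integral_indicator) auto
      finally show ?thesis ..
    qed
    finally show "emeasure (distr (density M (\<lambda>x. ennreal (indicator R x * P x))) M F) A = emeasure (density M (indicator D)) A" .
  qed
qed

lemma cov_nn: assumes [measurable]: "u \<in> borel_measurable M"
  shows "(\<integral>\<^sup>+x. ennreal (indicator R x * P x) * u (F x) \<partial>M) = (\<integral>\<^sup>+x. indicator D x * u x \<partial>M)"
proof -
  have "(\<integral>\<^sup>+x. indicator D x * u x \<partial>M) = (\<integral>\<^sup>+x. u x \<partial>density M (indicator D))"
    by (subst nn_integral_density) auto
  also have "\<dots> = (\<integral>\<^sup>+x. u x \<partial>distr (density M (\<lambda>x. ennreal (indicator R x * P x))) M F)"
    by (simp add: meas_eq)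
  also have "\<dots> = (\<integral>\<^sup>+x. u (F x) \<partial>density M (\<lambda>x. ennreal (indicator R x * P x)))"
    by (subst nn_integral_distr) auto
  also have "\<dots> = (\<integral>\<^sup>+x. ennreal (indicator R x * P x) * u (F x) \<partial>M)"
    by (subst nn_integral_density) auto
  finally show ?thesis ..
qed

lemma cov_real: assumes [measurable]: "u \<in> borel_measurable M"
  shows "(\<integral>x. (indicator R x * P x) * u (F x) \<partial>M) = (\<integral>x. indicator D x * u x \<partial>M)"
proof -
  have "(\<integral>x. indicator D x * u x \<partial>M) = (\<integral>x. u x \<partial>density M (\<lambda>x. ennreal (indicator D x)))"
    by (subst integral_density) auto
  also have "\<dots> = (\<integral>x. u x \<partial>distr (density M (\<lambda>x. ennreal (indicator R x * P x))) M F)"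
    by (simp add: meas_eq[unfolded ennreal_indicator[symmetric]])
  also have "\<dots> = (\<integral>x. u (F x) \<partial>density M (\<lambda>x. ennreal (indicator R x * P x)))"
    by (subst integral_distr) auto
  also have "\<dots> = (\<integral>x. (indicator R x * P x) * u (F x) \<partial>M)"
    by (subst integral_density) (auto intro!: AE_I2 simp: Pnn)
  finally show ?thesis ..
qed

lemma pos: "AE x in M. x \<in> R \<longrightarrow> 0 < P x"
proof -
  obtain G where G: "G \<in> sets M" "G \<subseteq> R" "R - G \<in> null_sets M" "\<forall>x\<in>G. f (F x) = x \<and> F x \<in> D"
    "F ` G \<subseteq> D" "D - F ` G \<in> null_sets M" using G_ex by blast
  define Z where "Z = {x\<in>G. P x = 0}"
  have Zs: "Z \<in> sets M" unfolding Z_def using G(1) by measurable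
  have ZR: "Z \<subseteq> R" using G(2) Z_def by auto
  have FZ: "F ` Z \<in> sets M" "emeasure M (F ` Z) = (\<integral>\<^sup>+x. ennreal (P x) * indicator Z x \<partial>M)"
    using PF Zs ZR by auto
  have "(\<integral>\<^sup>+x. ennreal (P x) * indicator Z x \<partial>M) = (\<integral>\<^sup>+x. 0 \<partial>M)"
    by (intro nn_integral_cong) (auto simp: Z_def indicator_def)
  then have "F ` Z \<in> null_sets M" using FZ by (auto intro: null_setsI)
  then have N1: "F -` (F ` Z) \<inter> space M \<in> null_sets M" by (rule F_null)
  have "Z \<subseteq> F -` (F ` Z) \<inter> space M" using Zs sets.sets_into_space by blast
  then have "Z \<in> null_sets M" using N1 Zs null_sets_subset by blast
  then have "AE x in M. x \<notin> Z" by (rule AE_not_in)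
  moreover have "AE x in M. x \<notin> R - G" using G(3) by (rule AE_not_in)
  ultimately show ?thesis
  proof (eventually_elim)
    case (elim x)
    show ?case
    proof
      assume "x \<in> R"
      then have "x \<in> space M" "x \<in> G" "P x \<noteq> 0" using elim sets.sets_into_space[OF R] Z_def by auto
      then show "0 < P x" using Pnn by force
    qed
  qed
qed

definition "hh \<phi> x = indicator D x * (sqrt (\<phi> (f x)) / sqrt (P (f x)))"

lemma hh_meas[measurable]: assumes [measurable]: "\<phi> \<in> borel_measurable M" shows "hh \<phi> \<in> borel_measurable M"
proof -
  have "(\<lambda>y. sqrt (\<phi> y) / sqrt (P y)) \<circ> f \<in> borel_measurable (restrict_space M D)"
    by (rule measurable_comp[OF fm]) measurable
  then have "(\<lambda>x. indicator D x *\<^sub>R ((\<lambda>y. sqrt (\<phi> y) / sqrt (P y)) \<circ> f) x) \<in> borel_measurable M"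
    by (subst borel_measurable_restrict_space_iff[symmetric]) auto
  then show ?thesis unfolding hh_def[abs_def] by (simp add: o_def)
qed

lemma hhF: "AE x in M. x \<in> R \<longrightarrow> hh \<phi> (F x) = sqrt (\<phi> x) / sqrt (P x)"
proof -
  obtain G where G: "G \<in> sets M" "G \<subseteq> R" "R - G \<in> null_sets M" "\<forall>x\<in>G. f (F x) = x \<and> F x \<in> D"
    "F ` G \<subseteq> D" "D - F ` G \<in> null_sets M" using G_ex by blast
  have "AE x in M. x \<notin> R - G" using G(3) by (rule AE_not_in)
  then show ?thesis
    by eventually_elim (use G(4) in \<open>auto simp: hh_def\<close>)
qed

lemma hh_sq: assumes [measurable]: "integrable M \<phi>" and nn: "AE x in M. \<phi> x \<ge> 0" and E[measurable]: "E \<in> sets M"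
  shows "(\<integral>x. indicator E x * (hh \<phi> x)\<^sup>2 \<partial>M) = (\<integral>x. indicator (F -` E \<inter> space M) x * (indicator R x * \<phi> x) \<partial>M)"
proof -
  have "(\<integral>x. indicator E x * (hh \<phi> x)\<^sup>2 \<partial>M) = (\<integral>x. indicator D x * (indicator E x * (hh \<phi> x)\<^sup>2) \<partial>M)"
    by (intro Bochner_Integration.integral_cong) (auto simp: hh_def indicator_def)
  also have "\<dots> = (\<integral>x. (indicator R x * P x) * (indicator E (F x) * (hh \<phi> (F x))\<^sup>2) \<partial>M)"
    by (rule cov_real[symmetric]) measurable
  also have "\<dots> = (\<integral>x. indicator (F -` E \<inter> space M) x * (indicator R x * \<phi> x) \<partial>M)"
  proof (rule integral_cong_AE)
    show "AE x in M. indicator R x * P x * (indicator E (F x) * (hh \<phi> (F x))\<^sup>2) =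
      indicator (F -` E \<inter> space M) x * (indicator R x * \<phi> x)"
      using pos hhF[of \<phi>] nn
    proof eventually_elim
      case (elim x)
      show ?case
      proof (cases "x \<in> R")
        case True
        then have "P x > 0" "hh \<phi> (F x) = sqrt (\<phi> x) / sqrt (P x)" using elim by auto
        then have "P x * (hh \<phi> (F x))\<^sup>2 = \<phi> x" using elim(3) by (simp add: power_divide)
        moreover have "x \<in> space M" using True sets.sets_into_space[OF R] by auto
        ultimately show ?thesis using True by (auto simp: indicator_def)
      qed (simp add: indicator_def)
    qed
  qed measurable
  finally show ?thesis .
qed

lemma hh_L2: assumes [measurable]: "integrable M \<phi>" and nn: "AE x in M. \<phi> x \<ge> 0"
  shows "L2 M (hh \<phi>)"
proof -
  have "(\<integral>\<^sup>+x. ennreal ((hh \<phi> x)\<^sup>2) \<partial>M) = (\<integral>\<^sup>+x. indicator D x * ennreal ((hh \<phi> x)\<^sup>2) \<partial>M)"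
    by (intro nn_integral_cong) (auto simp: hh_def indicator_def)
  also have "\<dots> = (\<integral>\<^sup>+x. ennreal (indicator R x * P x) * ennreal ((hh \<phi> (F x))\<^sup>2) \<partial>M)"
    by (rule cov_nn[symmetric]) measurable
  also have "\<dots> = (\<integral>\<^sup>+x. ennreal (indicator R x * \<phi> x) \<partial>M)"
  proof (rule nn_integral_cong_AE)
    show "AE x in M. ennreal (indicator R x * P x) * ennreal ((hh \<phi> (F x))\<^sup>2) = ennreal (indicator R x * \<phi> x)"
      using pos hhF[of \<phi>] nn
    proof eventually_elim
      case (elim x)
      show ?case
      proof (cases "x \<in> R")
        case True
        then have "P x > 0" "hh \<phi> (F x) = sqrt (\<phi> x) / sqrt (P x)" using elim by auto
        then have "P x * (hh \<phi> (F x))\<^sup>2 = \<phi> x" using elim(3) by (simp add: power_divide)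
        then show ?thesis using True \<open>P x > 0\<close> by (simp add: ennreal_mult[symmetric])
      qed (simp add: indicator_def)
    qed
  qed
  also have "\<dots> < \<infinity>"
  proof -
    have i: "integrable M (\<lambda>x. indicator R x * \<phi> x)" using integrable_real_mult_indicator[OF R assms(1)] by (simp add: mult.commute)
    have "(\<integral>\<^sup>+x. ennreal (indicator R x * \<phi> x) \<partial>M) = ennreal (\<integral>x. indicator R x * \<phi> x \<partial>M)"
      by (rule nn_integral_eq_integral[OF i]) (use nn in \<open>auto simp: indicator_def\<close>)
    then show ?thesis by simp
  qed
  finally have "integrable M (\<lambda>x. (hh \<phi> x)\<^sup>2)"
    by (intro integrableI_nonneg) auto
  then show ?thesis unfolding L2_def by auto
qed

lemma hh_adj: assumes [measurable]: "integrable M \<phi>" and nn: "AE x in M. \<phi> x \<ge> 0"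
  and a[measurable]: "a \<in> borel_measurable M"
  shows "(\<integral>x. a x * hh \<phi> x \<partial>M) = (\<integral>x. indicator R x * sqrt (P x) * a (F x) * sqrt (\<phi> x) \<partial>M)"
proof -
  have "(\<integral>x. a x * hh \<phi> x \<partial>M) = (\<integral>x. indicator D x * (a x * hh \<phi> x) \<partial>M)"
    by (intro Bochner_Integration.integral_cong) (auto simp: hh_def indicator_def)
  also have "\<dots> = (\<integral>x. (indicator R x * P x) * (a (F x) * hh \<phi> (F x)) \<partial>M)"
    by (rule cov_real[symmetric]) measurable
  also have "\<dots> = (\<integral>x. indicator R x * sqrt (P x) * a (F x) * sqrt (\<phi> x) \<partial>M)"
  proof (rule integral_cong_AE)
    show "AE x in M. indicator R x * P x * (a (F x) * hh \<phi> (F x)) =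
      indicator R x * sqrt (P x) * a (F x) * sqrt (\<phi> x)"
      using pos hhF[of \<phi>]
    proof eventually_elim
      case (elim x)
      show ?case
      proof (cases "x \<in> R")
        case True
        then have p: "P x > 0" "hh \<phi> (F x) = sqrt (\<phi> x) / sqrt (P x)" using elim by auto
        have "P x = sqrt (P x) * sqrt (P x)" using p(1) by simp
        have "P x * (a (F x) * hh \<phi> (F x)) = a (F x) * sqrt (\<phi> x) * (P x / sqrt (P x))"
          using p by simp
        also have "P x / sqrt (P x) = sqrt (P x)" using p(1) by (simp add: real_div_sqrt)
        finally have X: "P x * (a (F x) * hh \<phi> (F x)) = sqrt (P x) * a (F x) * sqrt (\<phi> x)" by (simp only: ac_simps)
        have ind: "indicator R x = (1::real)" using True by simp
        show ?thesis by (simp only: ind mult_1_left X)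
      qed (simp add: indicator_def)
    qed
  qed measurable
  finally show ?thesis .
qed

lemma g_eq: assumes [measurable]: "integrable M \<phi>" and nn: "AE x in M. \<phi> x \<ge> 0"
  and g: "L2 M g"
  and adj: "\<forall>a. L2 M a \<longrightarrow> (\<integral>x. indicator R x * sqrt (P x) * a (F x) * sqrt (\<phi> x) \<partial>M) = (\<integral>x. a x * g x \<partial>M)"
  shows "AE x in M. g x = hh \<phi> x"
proof -
  have h: "L2 M (hh \<phi>)" by (rule hh_L2[OF assms(1) nn])
  have d: "L2 M (\<lambda>x. g x - hh \<phi> x)" by (rule L2_diff[OF g h])
  have [measurable]: "g \<in> borel_measurable M" using g unfolding L2_def by auto
  have "(\<integral>x. (g x - hh \<phi> x) * g x \<partial>M) = (\<integral>x. (g x - hh \<phi> x) * hh \<phi> x \<partial>M)"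
    using adj d hh_adj[OF assms(1) nn, of "\<lambda>x. g x - hh \<phi> x"] by auto
  then have "(\<integral>x. (g x - hh \<phi> x) * g x - (g x - hh \<phi> x) * hh \<phi> x \<partial>M) = 0"
    using L2_prod[OF d g] L2_prod[OF d h] by simp
  then have "(\<integral>x. (g x - hh \<phi> x)\<^sup>2 \<partial>M) = 0" by (simp add: power2_eq_square algebra_simps)
  then have "AE x in M. (g x - hh \<phi> x)\<^sup>2 = 0"
    using d unfolding L2_def by (subst integral_nonneg_eq_0_iff_AE[symmetric]) auto
  then show ?thesis by eventually_elim simp
qed

lemma per_i: assumes [measurable]: "integrable M \<phi>" and nn: "AE x in M. \<phi> x \<ge> 0"
  and g: "L2 M g"
  and adj: "\<forall>a. L2 M a \<longrightarrow> (\<integral>x. indicator R x * sqrt (P x) * a (F x) * sqrt (\<phi> x) \<partial>M) = (\<integral>x. a x * g x \<partial>M)"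
  and E[measurable]: "E \<in> sets M"
  shows "(\<integral>x. indicator E x * (g x)\<^sup>2 \<partial>M) = (\<integral>x. indicator (F -` E \<inter> space M) x * (indicator R x * \<phi> x) \<partial>M)"
proof -
  have "(\<integral>x. indicator E x * (g x)\<^sup>2 \<partial>M) = (\<integral>x. indicator E x * (hh \<phi> x)\<^sup>2 \<partial>M)"
    using g_eq[OF assms(1) nn g adj] by (intro integral_cong_AE) (use g in \<open>auto simp: L2_def\<close>)
  also have "\<dots> = (\<integral>x. indicator (F -` E \<inter> space M) x * (indicator R x * \<phi> x) \<partial>M)" by (rule hh_sq[OF assms(1) nn E])
  finally show ?thesis .
qed

end


lemma AE_le_int: fixes u v :: "'a \<Rightarrow> real"
  assumes iu: "integrable M u" and iv: "integrable M v"
    and le: "\<forall>E\<in>sets M. (\<integral>x. indicator E x * u x \<partial>M) \<le> (\<integral>x. indicator E x * v x \<partial>M)"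
  shows "AE x in M. u x \<le> v x"
proof -
  have [measurable]: "u \<in> borel_measurable M" "v \<in> borel_measurable M" using iu iv by auto
  define E where "E = {x\<in>space M. v x < u x}"
  have E[measurable]: "E \<in> sets M" unfolding E_def by measurable
  have i1: "integrable M (\<lambda>x. indicator E x * u x)" using integrable_real_mult_indicator[OF E iu] by (simp add: mult.commute)
  have i2: "integrable M (\<lambda>x. indicator E x * v x)" using integrable_real_mult_indicator[OF E iv] by (simp add: mult.commute)
  have iw: "integrable M (\<lambda>x. indicator E x * u x - indicator E x * v x)" using i1 i2 by auto
  have nn: "AE x in M. 0 \<le> indicator E x * u x - indicator E x * v x"
    by (intro AE_I2) (auto simp: E_def indicator_def)
  have "(\<integral>x. indicator E x * u x - indicator E x * v x \<partial>M) = (\<integral>x. indicator E x * u x \<partial>M) - (\<integral>x. indicator E x * v x \<partial>M)"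
    using i1 i2 by simp
  also have "\<dots> \<le> 0" using le E by auto
  finally have "(\<integral>x. indicator E x * u x - indicator E x * v x \<partial>M) = 0"
    using integral_nonneg_AE[OF nn] by linarith
  then have "AE x in M. indicator E x * u x - indicator E x * v x = 0"
    using integral_nonneg_eq_0_iff_AE[OF iw nn] by simp
  then show ?thesis using AE_space
    by eventually_elim (auto simp: E_def indicator_def split: if_splits)
qed

lemma sum_ind_disj: fixes N :: nat and R :: "nat \<Rightarrow> 'a set" assumes "\<forall>i j. i \<noteq> j \<longrightarrow> x \<notin> R i \<inter> R j"
  shows "(\<Sum>i<N. indicator (R i) x) = (indicator (\<Union>i<N. R i) x :: real)"
proof (induction N)
  case (Suc N)
  have sp: "(\<Sum>i<Suc N. indicator (R i) x) = (\<Sum>i<N. indicator (R i) x) + (indicator (R N) x :: real)"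
    by (rule sum.lessThan_Suc)
  show ?case
  proof (cases "x \<in> R N")
    case True
    then have "x \<notin> (\<Union>i<N. R i)" using assms by (metis IntI UN_E lessThan_iff less_irrefl)
    moreover have "x \<in> (\<Union>i<Suc N. R i)" using True by auto
    ultimately show ?thesis unfolding sp Suc.IH using True by (simp only: indicator_simps) simp
  next
    case False
    moreover have "(\<Union>i<Suc N. R i) = (\<Union>i<N. R i) \<union> R N" by (auto simp: lessThan_Suc)
    ultimately show ?thesis unfolding sp Suc.IH by (simp add: indicator_def)
  qed
qed simp

theorem mainTheorem6:
  fixes M :: "'a measure" and A :: "nat \<Rightarrow> nat \<Rightarrow> nat"
    and f :: "nat \<Rightarrow> 'a \<Rightarrow> 'a" and D R :: "nat \<Rightarrow> 'a set" and F :: "'a \<Rightarrow> 'a"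
    and Phi_f Phi_finv :: "nat \<Rightarrow> 'a \<Rightarrow> real"
    and \<phi> p :: "'a \<Rightarrow> real" and g :: "nat \<Rightarrow> 'a \<Rightarrow> real"
  assumes "sigma_finite_measure M"
    and "\<forall>i j. A i j \<in> {0, 1}"
    and "A_inf_branching_system M A f D R F Phi_f Phi_finv"
    and "integrable M \<phi>" and "AE x in M. \<phi> x \<ge> 0"
    and "\<forall>i. is_adjoint_image M (T_op R F Phi_finv i) (\<lambda>x. sqrt (\<phi> x)) (g i)"
    and "is_PF M F \<phi> p"
  shows "(\<forall>N. (AE x in M. \<phi> x \<noteq> 0 \<longrightarrow> x \<in> (\<Union>i<N. R i)) \<longrightarrow>
             (AE x in M. p x = (\<Sum>i<N. (g i x)\<^sup>2)))
       \<and> ((AE x in M. \<phi> x \<noteq> 0 \<longrightarrow> x \<in> (\<Union>i. R i)) \<longrightarrow>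
             (\<lambda>N. \<integral>x. \<bar>p x - (\<Sum>i<N. (g i x)\<^sup>2)\<bar> \<partial>M) \<longlonglongrightarrow> 0)"
proof -
  note br = assms(3)[unfolded A_inf_branching_system_def]
  have phi[measurable]: "integrable M \<phi>" and nn: "AE x in M. \<phi> x \<ge> 0" using assms(4,5) by auto
  have phim[measurable]: "\<phi> \<in> borel_measurable M" using phi by auto
  have Fm[measurable]: "F \<in> measurable M M" using br unfolding nonsingular_def by auto
  have Rs[measurable]: "\<And>i. R i \<in> sets M" using br by auto
  have gL2: "\<And>i. L2 M (g i)" using assms(6) unfolding is_adjoint_image_def by auto
  have gm[measurable]: "\<And>i. g i \<in> borel_measurable M" using gL2 unfolding L2_def by auto
  have gi: "\<And>i. integrable M (\<lambda>x. (g i x)\<^sup>2)" using gL2 unfolding L2_def by auto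
  have pi[measurable]: "integrable M p" and pE: "\<And>E. E \<in> sets M \<Longrightarrow>
      (\<integral>x. indicator E x * p x \<partial>M) = (\<integral>x. indicator (F -` E \<inter> space M) x * \<phi> x \<partial>M)"
    using assms(7) unfolding is_PF_def set_lebesgue_integral_def by auto
  have P1: "\<And>i E. E \<in> sets M \<Longrightarrow> (\<integral>x. indicator E x * (g i x)\<^sup>2 \<partial>M) =
      (\<integral>x. indicator (F -` E \<inter> space M) x * (indicator (R i) x * \<phi> x) \<partial>M)"
  proof -
    fix i E assume E: "E \<in> sets M"
    interpret b: br1 M F "D i" "R i" "f i" "Phi_f i" "Phi_finv i"
    proof unfold_locales
      note c1 = br[THEN conjunct2, THEN conjunct1, rule_format, of i]
      note c2 = br[THEN conjunct2, THEN conjunct2, THEN conjunct1, rule_format, of i]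
      note c6 = br[THEN conjunct2, THEN conjunct2, THEN conjunct2, THEN conjunct2, THEN conjunct2, THEN conjunct2, THEN conjunct1, rule_format, of i]
      note c7 = br[THEN conjunct2, THEN conjunct2, THEN conjunct2, THEN conjunct2, THEN conjunct2, THEN conjunct2, THEN conjunct2, rule_format, of i]
      show "nonsingular M F" using br by (rule conjunct1)
      show "D i \<in> sets M" using c1 by (elim conjE)
      show "R i \<in> sets M" using c1 by (elim conjE)
      show "f i \<in> measurable (restrict_space M (D i)) M" using c1 by (elim conjE)
      show "f i ` D i \<subseteq> R i" using c1 by (elim conjE)
      show "aeeq M (f i ` D i) (R i)" using c1 by (elim conjE)
      show "AE x in M. x \<in> D i \<longrightarrow> F (f i x) = x" by (rule c2)
      show "\<forall>E\<in>sets M. E \<subseteq> D i \<longrightarrow> f i ` E \<in> sets M \<and> emeasure M (f i ` E) = (\<integral>\<^sup>+x\<in>E. ennreal (Phi_f i x) \<partial>M)"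
        using c6 by (elim conjE)
      show "Phi_finv i \<in> borel_measurable M" using c7 by (elim conjE)
      show "\<forall>x\<in>space M. 0 \<le> Phi_finv i x" using c7 by (elim conjE)
      show "\<forall>x. x \<notin> R i \<longrightarrow> Phi_finv i x = 0" using c7 by (elim conjE)
      show "\<forall>E\<in>sets M. E \<subseteq> R i \<longrightarrow> F ` E \<in> sets M \<and> emeasure M (F ` E) = (\<integral>\<^sup>+x\<in>E. ennreal (Phi_finv i x) \<partial>M)"
        using c7 by (elim conjE)
    qed
    show "(\<integral>x. indicator E x * (g i x)\<^sup>2 \<partial>M) =
      (\<integral>x. indicator (F -` E \<inter> space M) x * (indicator (R i) x * \<phi> x) \<partial>M)"
    proof (rule b.per_i[OF phi nn gL2 _ E])
      show "\<forall>a. L2 M a \<longrightarrow> (\<integral>x. indicator (R i) x * sqrt (Phi_finv i x) * a (F x) * sqrt (\<phi> x) \<partial>M) = (\<integral>x. a x * g i x \<partial>M)"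
        using assms(6) unfolding is_adjoint_image_def T_op_def by auto
    qed
  qed
  have DISJ: "AE x in M. \<forall>i j. i \<noteq> j \<longrightarrow> x \<notin> R i \<inter> R j"
  proof -
    have "\<And>i j. AE x in M. i \<noteq> j \<longrightarrow> x \<notin> R i \<inter> R j"
    proof -
      fix i j :: nat
      show "AE x in M. i \<noteq> j \<longrightarrow> x \<notin> R i \<inter> R j"
      proof (cases "i = j")
        case False
        then have "R i \<inter> R j \<in> null_sets M" using br by (auto intro!: null_setsI)
        then have "AE x in M. x \<notin> R i \<inter> R j" by (rule AE_not_in)
        then show ?thesis by eventually_elim simp
      qed simp
    qed
    then show ?thesis by (simp add: AE_all_countable)
  qed
  define S where "S N x = (\<Sum>i<N. (g i x)\<^sup>2)" for N x
  define U where "U N = (\<Union>i<N. R i)" for N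
  have Um[measurable]: "\<And>N. U N \<in> sets M" unfolding U_def by auto
  have Si: "\<And>N. integrable M (S N)" unfolding S_def[abs_def] using gi by auto
  have P2: "\<And>N E. E \<in> sets M \<Longrightarrow> (\<integral>x. indicator E x * S N x \<partial>M) =
      (\<integral>x. indicator (F -` E \<inter> space M) x * (indicator (U N) x * \<phi> x) \<partial>M)"
  proof -
    fix N E assume E[measurable]: "E \<in> sets M"
    have FE[measurable]: "F -` E \<inter> space M \<in> sets M" by measurable
    have "(\<integral>x. indicator E x * S N x \<partial>M) = (\<integral>x. (\<Sum>i<N. indicator E x * (g i x)\<^sup>2) \<partial>M)"
      unfolding S_def by (simp add: sum_distrib_left)
    also have "\<dots> = (\<Sum>i<N. (\<integral>x. indicator E x * (g i x)\<^sup>2 \<partial>M))"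
      by (rule Bochner_Integration.integral_sum) (use integrable_real_mult_indicator[OF E gi] in \<open>simp add: mult.commute\<close>)
    also have "\<dots> = (\<Sum>i<N. (\<integral>x. indicator (F -` E \<inter> space M) x * (indicator (R i) x * \<phi> x) \<partial>M))"
      using P1[OF E] by simp
    also have "\<dots> = (\<integral>x. (\<Sum>i<N. indicator (F -` E \<inter> space M) x * (indicator (R i) x * \<phi> x)) \<partial>M)"
    proof (rule Bochner_Integration.integral_sum[symmetric])
      fix i
      have "integrable M (\<lambda>x. \<phi> x * indicator (R i) x * indicator (F -` E \<inter> space M) x)"
        by (intro integrable_real_mult_indicator phi) auto
      then show "integrable M (\<lambda>x. indicator (F -` E \<inter> space M) x * (indicator (R i) x * \<phi> x))"
        by (simp add: ac_simps)
    qed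
    also have "\<dots> = (\<integral>x. indicator (F -` E \<inter> space M) x * (indicator (U N) x * \<phi> x) \<partial>M)"
    proof (rule integral_cong_AE)
      show "AE x in M. (\<Sum>i<N. indicator (F -` E \<inter> space M) x * (indicator (R i) x * \<phi> x)) =
          indicator (F -` E \<inter> space M) x * (indicator (U N) x * \<phi> x)"
        using DISJ
      proof eventually_elim
        case (elim x)
        have "(\<Sum>i<N. indicator (F -` E \<inter> space M) x * (indicator (R i) x * \<phi> x)) =
          indicator (F -` E \<inter> space M) x * ((\<Sum>i<N. indicator (R i) x) * \<phi> x)"
          by (simp only: sum_distrib_left sum_distrib_right)
        also have "(\<Sum>i<N. indicator (R i) x) = (indicator (U N) x :: real)"
          unfolding U_def by (rule sum_ind_disj[OF elim])
        finally show ?case .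
      qed
    qed measurable
    finally show "(\<integral>x. indicator E x * S N x \<partial>M) =
      (\<integral>x. indicator (F -` E \<inter> space M) x * (indicator (U N) x * \<phi> x) \<partial>M)" .
  qed
  have part1: "\<forall>N. (AE x in M. \<phi> x \<noteq> 0 \<longrightarrow> x \<in> (\<Union>i<N. R i)) \<longrightarrow>
             (AE x in M. p x = (\<Sum>i<N. (g i x)\<^sup>2))"
  proof (intro allI impI)
    fix N assume h: "AE x in M. \<phi> x \<noteq> 0 \<longrightarrow> x \<in> (\<Union>i<N. R i)"
    have eq: "\<And>E. E \<in> sets M \<Longrightarrow> (\<integral>x. indicator E x * S N x \<partial>M) = (\<integral>x. indicator E x * p x \<partial>M)"
    proof -
      fix E assume E: "E \<in> sets M"
      have "(\<integral>x. indicator E x * S N x \<partial>M) = (\<integral>x. indicator (F -` E \<inter> space M) x * (indicator (U N) x * \<phi> x) \<partial>M)"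
        by (rule P2[OF E])
      also have "\<dots> = (\<integral>x. indicator (F -` E \<inter> space M) x * \<phi> x \<partial>M)"
      proof (rule integral_cong_AE)
        show "AE x in M. indicator (F -` E \<inter> space M) x * (indicator (U N) x * \<phi> x) = indicator (F -` E \<inter> space M) x * \<phi> x"
          using h by eventually_elim (auto simp: U_def indicator_def)
      qed (use E in measurable)
      also have "\<dots> = (\<integral>x. indicator E x * p x \<partial>M)" by (rule pE[OF E, symmetric])
      finally show "(\<integral>x. indicator E x * S N x \<partial>M) = (\<integral>x. indicator E x * p x \<partial>M)" .
    qed
    have "AE x in M. S N x \<le> p x" using eq by (intro AE_le_int[OF Si pi]) auto
    moreover have "AE x in M. p x \<le> S N x" using eq by (intro AE_le_int[OF pi Si]) auto
    ultimately show "AE x in M. p x = (\<Sum>i<N. (g i x)\<^sup>2)" unfolding S_def by eventually_elim auto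
  qed
  have part2: "(AE x in M. \<phi> x \<noteq> 0 \<longrightarrow> x \<in> (\<Union>i. R i)) \<longrightarrow>
             (\<lambda>N. \<integral>x. \<bar>p x - (\<Sum>i<N. (g i x)\<^sup>2)\<bar> \<partial>M) \<longlonglongrightarrow> 0"
  proof
    assume h: "AE x in M. \<phi> x \<noteq> 0 \<longrightarrow> x \<in> (\<Union>i. R i)"
    define s where "s N x = (1 - indicator (U N) x) * \<phi> x" for N x
    have sm[measurable]: "\<And>N. s N \<in> borel_measurable M" unfolding s_def[abs_def] by measurable
    have ge: "\<And>N. AE x in M. S N x \<le> p x"
    proof -
      fix N
      show "AE x in M. S N x \<le> p x"
      proof (rule AE_le_int[OF Si pi], intro ballI)
        fix E assume E[measurable]: "E \<in> sets M"
        have "(\<integral>x. indicator E x * S N x \<partial>M) = (\<integral>x. indicator (F -` E \<inter> space M) x * (indicator (U N) x * \<phi> x) \<partial>M)"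
          by (rule P2[OF E])
        also have "\<dots> \<le> (\<integral>x. indicator (F -` E \<inter> space M) x * \<phi> x \<partial>M)"
        proof (rule integral_mono_AE)
          have "integrable M (\<lambda>x. \<phi> x * indicator (U N) x * indicator (F -` E \<inter> space M) x)"
            by (intro integrable_real_mult_indicator phi) auto
          then show "integrable M (\<lambda>x. indicator (F -` E \<inter> space M) x * (indicator (U N) x * \<phi> x))"
            by (simp add: ac_simps)
          have "integrable M (\<lambda>x. \<phi> x * indicator (F -` E \<inter> space M) x)"
            by (intro integrable_real_mult_indicator phi) auto
          then show "integrable M (\<lambda>x. indicator (F -` E \<inter> space M) x * \<phi> x)"
            by (simp add: ac_simps)
          show "AE x in M. indicator (F -` E \<inter> space M) x * (indicator (U N) x * \<phi> x) \<le> indicator (F -` E \<inter> space M) x * \<phi> x"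
            using nn by eventually_elim (auto simp: indicator_def)
        qed
        also have "\<dots> = (\<integral>x. indicator E x * p x \<partial>M)" by (rule pE[OF E, symmetric])
        finally show "(\<integral>x. indicator E x * S N x \<partial>M) \<le> (\<integral>x. indicator E x * p x \<partial>M)" .
      qed
    qed
    have abs_eq: "\<And>N. (\<integral>x. \<bar>p x - S N x\<bar> \<partial>M) = (\<integral>x. s N x \<partial>M)"
    proof -
      fix N
      have "(\<integral>x. \<bar>p x - S N x\<bar> \<partial>M) = (\<integral>x. indicator (space M) x * p x \<partial>M) - (\<integral>x. indicator (space M) x * S N x \<partial>M)"
      proof -
        have "(\<integral>x. \<bar>p x - S N x\<bar> \<partial>M) = (\<integral>x. p x - S N x \<partial>M)"
        proof (rule integral_cong_AE)
          show "AE x in M. \<bar>p x - S N x\<bar> = p x - S N x" using ge[of N] by eventually_elim simp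
        qed (use Si[of N] in auto)
        also have "\<dots> = (\<integral>x. p x \<partial>M) - (\<integral>x. S N x \<partial>M)" using pi Si[of N] by simp
        also have "(\<integral>x. p x \<partial>M) = (\<integral>x. indicator (space M) x * p x \<partial>M)"
          by (intro Bochner_Integration.integral_cong) auto
        also have "(\<integral>x. S N x \<partial>M) = (\<integral>x. indicator (space M) x * S N x \<partial>M)"
          by (intro Bochner_Integration.integral_cong) auto
        finally show ?thesis .
      qed
      also have "\<dots> = (\<integral>x. indicator (space M) x * \<phi> x \<partial>M) - (\<integral>x. indicator (space M) x * (indicator (U N) x * \<phi> x) \<partial>M)"
      proof -
        have sp: "F -` space M \<inter> space M = space M" using measurable_space[OF Fm] by auto
        show ?thesis using pE[of "space M"] P2[of "space M" N] unfolding sp by simp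
      qed
      also have "\<dots> = (\<integral>x. s N x \<partial>M)"
      proof -
        have i2: "integrable M (\<lambda>x. \<phi> x * indicator (U N) x)" by (intro integrable_real_mult_indicator phi) auto
        have "(\<integral>x. indicator (space M) x * \<phi> x \<partial>M) = (\<integral>x. \<phi> x \<partial>M)"
          by (intro Bochner_Integration.integral_cong) auto
        moreover have "(\<integral>x. indicator (space M) x * (indicator (U N) x * \<phi> x) \<partial>M) = (\<integral>x. \<phi> x * indicator (U N) x \<partial>M)"
          by (intro Bochner_Integration.integral_cong) auto
        moreover have "(\<integral>x. s N x \<partial>M) = (\<integral>x. \<phi> x \<partial>M) - (\<integral>x. \<phi> x * indicator (U N) x \<partial>M)"
          unfolding s_def using phi i2 by (simp add: algebra_simps)
        ultimately show ?thesis by simp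
      qed
      finally show "(\<integral>x. \<bar>p x - S N x\<bar> \<partial>M) = (\<integral>x. s N x \<partial>M)" .
    qed
    have "(\<lambda>N. \<integral>x. s N x \<partial>M) \<longlonglongrightarrow> (\<integral>x. 0 \<partial>M)"
    proof (rule integral_dominated_convergence[where w="\<lambda>x. \<bar>\<phi> x\<bar>"])
      show "integrable M (\<lambda>x. \<bar>\<phi> x\<bar>)" using phi by auto
      show "AE x in M. (\<lambda>N. s N x) \<longlonglongrightarrow> 0"
        using h
      proof eventually_elim
        case (elim x)
        show ?case
        proof (cases "\<phi> x = 0")
          case True then show ?thesis by (simp add: s_def)
        next
          case False
          then obtain i0 where "x \<in> R i0" using elim by auto
          then have "\<forall>\<^sub>F N in sequentially. s N x = 0"
            by (intro eventually_sequentiallyI[of "Suc i0"]) (auto simp: s_def U_def indicator_def)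
          then show ?thesis by (rule tendsto_eventually)
        qed
      qed
      show "\<And>N. AE x in M. norm (s N x) \<le> \<bar>\<phi> x\<bar>"
        by (intro AE_I2) (auto simp: s_def indicator_def abs_mult)
    qed auto
    then show "(\<lambda>N. \<integral>x. \<bar>p x - (\<Sum>i<N. (g i x)\<^sup>2)\<bar> \<partial>M) \<longlonglongrightarrow> 0"
      using abs_eq unfolding S_def by simp
  qed
  show ?thesis using part1 part2 by blast
qed


end
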